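(* Let $\Gamma$ be a distance-regular graph with valency $k\geq 3$, diameter $D\geq 3$, and distinct eigenvalues $k=\theta_0>\theta_1>\cdots>\theta_D$, such that $\theta_1\leq 1$. Then $D=3$ and $\Gamma$ is isomorphic to the complete bipartite graph $K_{k+1,k+1}$ with a perfect matching removed.
   Context: All graphs are finite, simple, undirected and connected. $\Gamma$ is distance-regular with diameter $D$ if there are integers $b_i,c_i$ such that for all vertices $x,y$ with $d(x,y)=i$, $y$ has exactly $c_i$ neighbours at distance $i-1$ from $x$ and $b_i$ neighbours at distance $i+1$ from $x$; the valency is $k=b_0$. Eigenvalues are those of the adjacency matrix. *)

theory Defs
  imports Complex_Main
begin

definition simple_graph :: "'a set \<Rightarrow> ('a \<Rightarrow> 'a \<Rightarrow> bool) \<Rightarrow> bool" where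
  "simple_graph V E \<longleftrightarrow> finite V \<and> V \<noteq> {} \<and>
     (\<forall>x y. E x y \<longrightarrow> x \<in> V \<and> y \<in> V) \<and>
     (\<forall>x y. E x y \<longrightarrow> E y x) \<and> (\<forall>x. \<not> E x x)"

fun walk :: "('a \<Rightarrow> 'a \<Rightarrow> bool) \<Rightarrow> 'a \<Rightarrow> 'a \<Rightarrow> nat \<Rightarrow> bool" where
  "walk E x y 0 \<longleftrightarrow> x = y"
| "walk E x z (Suc n) \<longleftrightarrow> (\<exists>y. E x y \<and> walk E y z n)"

definition connected_graph :: "'a set \<Rightarrow> ('a \<Rightarrow> 'a \<Rightarrow> bool) \<Rightarrow> bool" where
  "connected_graph V E \<longleftrightarrow> (\<forall>x\<in>V. \<forall>y\<in>V. \<exists>n. walk E x y n)"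

definition gdist :: "('a \<Rightarrow> 'a \<Rightarrow> bool) \<Rightarrow> 'a \<Rightarrow> 'a \<Rightarrow> nat" where
  "gdist E x y = (LEAST n. walk E x y n)"

definition diameter :: "'a set \<Rightarrow> ('a \<Rightarrow> 'a \<Rightarrow> bool) \<Rightarrow> nat" where
  "diameter V E = Max {gdist E x y | x y. x \<in> V \<and> y \<in> V}"

definition distance_regular ::
  "'a set \<Rightarrow> ('a \<Rightarrow> 'a \<Rightarrow> bool) \<Rightarrow> (nat \<Rightarrow> nat) \<Rightarrow> (nat \<Rightarrow> nat) \<Rightarrow> bool" where
  "distance_regular V E b c \<longleftrightarrow> simple_graph V E \<and> connected_graph V E \<and>
     (\<forall>x\<in>V. \<forall>y\<in>V. let i = gdist E x y in
        (i \<ge> 1 \<longrightarrow> card {z\<in>V. E y z \<and> gdist E x z = i - 1} = c i) \<and>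
        card {z\<in>V. E y z \<and> gdist E x z = i + 1} = b i)"

definition adj_eigenvalue :: "'a set \<Rightarrow> ('a \<Rightarrow> 'a \<Rightarrow> bool) \<Rightarrow> real \<Rightarrow> bool" where
  "adj_eigenvalue V E \<theta> \<longleftrightarrow> (\<exists>f :: 'a \<Rightarrow> real. (\<exists>x\<in>V. f x \<noteq> 0) \<and>
       (\<forall>x\<in>V. (\<Sum>y\<in>{y\<in>V. E x y}. f y) = \<theta> * f x))"

text \<open>K_{m,m} minus a perfect matching, on vertex set {0..<m} \<times> UNIV::bool:
  (i,s) ~ (j,t) iff s \<noteq> t and i \<noteq> j.\<close>
definition crown_adj :: "nat \<times> bool \<Rightarrow> nat \<times> bool \<Rightarrow> bool" where
  "crown_adj u v \<longleftrightarrow> snd u \<noteq> snd v \<and> fst u \<noteq> fst v"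

definition graph_iso ::
  "'a set \<Rightarrow> ('a \<Rightarrow> 'a \<Rightarrow> bool) \<Rightarrow> 'b set \<Rightarrow> ('b \<Rightarrow> 'b \<Rightarrow> bool) \<Rightarrow> bool" where
  "graph_iso V E W F \<longleftrightarrow> (\<exists>f. bij_betw f V W \<and> (\<forall>x\<in>V. \<forall>y\<in>V. E x y \<longleftrightarrow> F (f x) (f y)))"

end

theory Submission
  imports Defs "HOL-Analysis.Analysis"
begin

hide_const (open) Elementary_Metric_Spaces.diameter


locale drg =
  fixes V :: "'a set" and E :: "'a \<Rightarrow> 'a \<Rightarrow> bool" and b c :: "nat \<Rightarrow> nat" and k :: nat
  assumes dr: "distance_regular V E b c" and kdef: "k = b 0"
begin

abbreviation d where "d \<equiv> gdist E"
definition N where "N u = {v\<in>V. E u v}"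

lemma fin: "finite V" and nonempty: "V \<noteq> {}" and edgeV: "E x y \<Longrightarrow> x \<in> V \<and> y \<in> V"
  and esym: "E x y \<Longrightarrow> E y x" and irr: "\<not> E x x"
  using dr unfolding distance_regular_def simple_graph_def by blast+

lemma conn: "x \<in> V \<Longrightarrow> y \<in> V \<Longrightarrow> \<exists>n. walk E x y n"
  using dr unfolding distance_regular_def connected_graph_def by blast

lemma drc: "x \<in> V \<Longrightarrow> y \<in> V \<Longrightarrow> d x y \<ge> 1 \<Longrightarrow> card {z\<in>V. E y z \<and> d x z = d x y - 1} = c (d x y)"
  using dr unfolding distance_regular_def Let_def by blast

lemma drb: "x \<in> V \<Longrightarrow> y \<in> V \<Longrightarrow> card {z\<in>V. E y z \<and> d x z = d x y + 1} = b (d x y)"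
  using dr unfolding distance_regular_def Let_def by blast

lemma walk_snoc: "walk E x y n \<Longrightarrow> E y z \<Longrightarrow> walk E x z (Suc n)"
  by (induction n arbitrary: x) auto

lemma walk_sym: "walk E x y n \<Longrightarrow> walk E y x n"
proof (induction n arbitrary: x)
  case 0 then show ?case by simp
next
  case (Suc n)
  then obtain z where "E x z" "walk E z y n" by auto
  then show ?case using Suc walk_snoc esym by blast
qed

lemma walk_V: "walk E x y n \<Longrightarrow> x \<in> V \<Longrightarrow> y \<in> V"
  by (induction n arbitrary: x) (auto dest: edgeV)

lemma d_walk: "x \<in> V \<Longrightarrow> y \<in> V \<Longrightarrow> walk E x y (d x y)"
  unfolding gdist_def by (rule LeastI_ex) (rule conn)

lemma d_le: "walk E x y n \<Longrightarrow> d x y \<le> n"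
  unfolding gdist_def by (rule Least_le)

lemma d_sym: "x \<in> V \<Longrightarrow> y \<in> V \<Longrightarrow> d x y = d y x"
  by (meson antisym d_le d_walk walk_sym)

lemma d_0: "x \<in> V \<Longrightarrow> y \<in> V \<Longrightarrow> d x y = 0 \<longleftrightarrow> x = y"
  by (metis d_walk d_le le_zero_eq walk.simps(1))

lemma d_self: "d x x = 0"
  using d_le[of x x 0] by simp

lemma d_1: "x \<in> V \<Longrightarrow> y \<in> V \<Longrightarrow> d x y = 1 \<longleftrightarrow> E x y"
proof
  assume "x \<in> V" "y \<in> V" "d x y = 1"
  then have "walk E x y 1" using d_walk by metis
  then show "E x y" by simp
next
  assume "x \<in> V" "y \<in> V" "E x y"
  then have "walk E x y 1" by simp
  then have "d x y \<le> 1" by (rule d_le)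
  moreover have "x \<noteq> y" using irr \<open>E x y\<close> by auto
  ultimately show "d x y = 1" using d_0 \<open>x\<in>V\<close> \<open>y\<in>V\<close> by fastforce
qed

lemma d_step: "x \<in> V \<Longrightarrow> E y z \<Longrightarrow> d x z \<le> d x y + 1"
  by (metis Suc_eq_plus1 d_le d_walk edgeV walk_snoc)

lemma d_step2: "x \<in> V \<Longrightarrow> E y z \<Longrightarrow> d x y \<le> d x z + 1"
  using d_step esym by blast

lemma d_pred: assumes "x \<in> V" "z \<in> V" "d x z = Suc n"
  shows "\<exists>y. E z y \<and> d x y = n"
proof -
  have "walk E z x (Suc n)" using d_walk[OF assms(1,2)] assms(3) walk_sym by metis
  then obtain y where y: "E z y" "walk E y x n" by auto
  then have "y \<in> V" using edgeV by blast
  have "d x y \<le> n" using d_le[OF walk_sym[OF y(2)]] .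
  moreover have "Suc n \<le> d x y + 1" using d_step[OF assms(1) esym[OF y(1)]] assms(3) by simp
  ultimately show ?thesis using y by auto
qed

lemma card_N: assumes "u \<in> V" shows "card (N u) = k"
proof -
  have "N u = {z\<in>V. E u z \<and> d u z = d u u + 1}"
    unfolding N_def using d_1 assms d_self by auto
  then show ?thesis using drb[OF assms assms] d_self kdef by simp
qed

lemma finN: "finite (N u)" unfolding N_def using fin by simp

lemma diam_ge: assumes "x \<in> V" "y \<in> V" shows "d x y \<le> diameter V E"
proof -
  have "finite {d x y | x y. x \<in> V \<and> y \<in> V}"
    using fin by (simp add: finite_image_set2)
  then show ?thesis unfolding Defs.diameter_def using assms by (intro Max_ge) auto
qed

lemma diam_in: "\<exists>x\<in>V. \<exists>y\<in>V. d x y = diameter V E"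
proof -
  have "finite {d x y | x y. x \<in> V \<and> y \<in> V}"
    using fin by (simp add: finite_image_set2)
  moreover have "{d x y | x y. x \<in> V \<and> y \<in> V} \<noteq> {}" using nonempty by auto
  ultimately have "diameter V E \<in> {d x y | x y. x \<in> V \<and> y \<in> V}"
    unfolding Defs.diameter_def by (rule Max_in)
  then obtain x y where "diameter V E = d x y" "x \<in> V" "y \<in> V" by blast
  then show ?thesis by metis
qed

lemma down: "x \<in> V \<Longrightarrow> z \<in> V \<Longrightarrow> d x z = n \<Longrightarrow> m \<le> n \<Longrightarrow> \<exists>y\<in>V. d x y = m"
proof (induction n arbitrary: z)
  case 0 then show ?case by auto
next
  case (Suc n)
  show ?case
  proof (cases "m = Suc n")
    case True then show ?thesis using Suc by auto
  next
    case False
    obtain y where "E z y" "d x y = n" using d_pred Suc by blast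
    then show ?thesis using Suc False edgeV by (metis le_Suc_eq)
  qed
qed

lemma step_up: assumes "x \<in> V" "y \<in> V" "b (d x y) \<ge> 1"
  shows "\<exists>z\<in>V. E y z \<and> d x z = d x y + 1"
proof -
  have "card {z\<in>V. E y z \<and> d x z = d x y + 1} \<noteq> 0" using drb[OF assms(1,2)] assms(3) by simp
  then have "{z\<in>V. E y z \<and> d x z = d x y + 1} \<noteq> {}" by (metis card.empty)
  then show ?thesis by auto
qed

lemma b_pos: assumes "x \<in> V" "y \<in> V" "z \<in> V" "E y z" "d x z = d x y + 1"
  shows "b (d x y) \<ge> 1"
proof -
  have "z \<in> {z\<in>V. E y z \<and> d x z = d x y + 1}" using assms by auto
  moreover have "finite {z\<in>V. E y z \<and> d x z = d x y + 1}" using fin by simp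
  ultimately have "card {z\<in>V. E y z \<and> d x z = d x y + 1} \<ge> 1"
    by (metis One_nat_def Suc_leI card_gt_0_iff empty_iff)
  then show ?thesis using drb[OF assms(1,2)] by simp
qed

end


context drg begin

definition Bl :: "('a \<Rightarrow> real) \<Rightarrow> ('a \<Rightarrow> real) \<Rightarrow> real" where
  "Bl g h = (\<Sum>u\<in>V. g u * (\<Sum>v\<in>N u. h v))"

lemma NV: "N u \<subseteq> V" unfolding N_def by auto

lemma sum_N: "(\<Sum>v\<in>N u. f v) = (\<Sum>v\<in>V. if E u v then f v else 0)"
  unfolding N_def using fin by (simp add: sum.inter_filter)

lemma Bl_sym: "Bl g h = Bl h g"
proof -
  have "Bl g h = (\<Sum>u\<in>V. \<Sum>v\<in>V. if E u v then g u * h v else 0)"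
    unfolding Bl_def sum_N by (simp add: sum_distrib_left if_distrib cong: if_cong)
  also have "\<dots> = (\<Sum>v\<in>V. \<Sum>u\<in>V. if E u v then g u * h v else 0)"
    by (rule sum.swap)
  also have "\<dots> = (\<Sum>v\<in>V. \<Sum>u\<in>V. if E v u then h v * g u else 0)"
    by (intro sum.cong refl) (auto dest: esym)
  also have "\<dots> = Bl h g"
    unfolding Bl_def sum_N by (simp add: sum_distrib_left if_distrib cong: if_cong)
  finally show ?thesis .
qed

lemma Bl_add_left: "Bl (\<lambda>v. f1 v + f2 v) g = Bl f1 g + Bl f2 g"
  unfolding Bl_def by (simp add: distrib_right sum.distrib)

lemma Bl_add_right: "Bl g (\<lambda>v. f1 v + f2 v) = Bl g f1 + Bl g f2"
  unfolding Bl_def by (simp add: distrib_left sum.distrib)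

lemma Bl_scale_left: "Bl (\<lambda>v. t * f v) g = t * Bl f g"
  unfolding Bl_def by (simp add: sum_distrib_left mult.assoc)

lemma Bl_scale_right: "Bl g (\<lambda>v. t * f v) = t * Bl g f"
  unfolding Bl_def by (simp add: sum_distrib_left mult_ac)

lemma Bl_expand: "Bl (\<lambda>v. h v + t * g v) (\<lambda>v. h v + t * g v) = Bl h h + 2 * t * Bl h g + t^2 * Bl g g"
  unfolding Bl_add_left Bl_add_right Bl_scale_left Bl_scale_right Bl_sym[of g h]
  by (simp add: algebra_simps power2_eq_square)

lemma Bl_const: "Bl h (\<lambda>_. 1) = real k * (\<Sum>u\<in>V. h u)"
  unfolding Bl_def using card_N by (simp add: sum_distrib_left mult.commute)

lemma quad_lemma:
  fixes a bb :: real
  assumes "\<forall>t. a * t + bb * t^2 \<le> 0" shows "a = 0"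
proof (rule ccontr)
  assume "a \<noteq> 0"
  define s where "s = 1 / (\<bar>bb\<bar> + 1)"
  have s0: "s > 0" unfolding s_def by simp
  have "bb * s > -1" unfolding s_def by (simp add: field_simps)
  then have p: "1 + bb * s > 0" by simp
  have "a * (s * a) + bb * (s * a)^2 = a^2 * (s * (1 + bb * s))"
    by (simp add: power2_eq_square algebra_simps)
  moreover have "a^2 * (s * (1 + bb * s)) > 0" using \<open>a \<noteq> 0\<close> s0 p by simp
  ultimately show False using assms by (metis not_le)
qed

end


context drg begin

lemma sum_ind: "u \<in> V \<Longrightarrow> (\<Sum>x\<in>V. (if x = u then 1 else 0) * F x) = (F u :: real)"
proof -
  assume u: "u \<in> V"
  have "(\<Sum>x\<in>V. (if x = u then 1 else 0) * F x) = (\<Sum>x\<in>V. if x = u then F x else 0)"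
    by (rule sum.cong) auto
  then show ?thesis using fin u by simp
qed

lemma max_principle:
  assumes ev: "\<forall>x\<in>V. (\<Sum>v\<in>N x. h v) = real k * h x" and s0: "(\<Sum>u\<in>V. h u) = 0"
  shows "\<forall>x\<in>V. h x = 0"
proof -
  define m where "m = Max (h ` V)"
  have fh: "finite (h ` V)" "h ` V \<noteq> {}" using fin nonempty by auto
  obtain x1 where x1: "x1 \<in> V" "h x1 = m" using Max_in[OF fh] unfolding m_def by auto
  have le: "\<And>v. v \<in> V \<Longrightarrow> h v \<le> m" unfolding m_def using fh by simp
  have clos: "h w = m" if "v \<in> V" "h v = m" "E v w" for v w
  proof -
    have "(\<Sum>u\<in>N v. m - h u) = real (card (N v)) * m - (\<Sum>u\<in>N v. h u)"
      by (simp add: sum_subtractf)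
    also have "\<dots> = 0" using ev that card_N by simp
    finally have z: "(\<Sum>u\<in>N v. m - h u) = 0" .
    have "\<forall>u\<in>N v. m - h u = 0"
      using sum_nonneg_eq_0_iff[OF finN[of v], of "\<lambda>u. m - h u"] z le NV by auto
    moreover have "w \<in> N v" using that edgeV unfolding N_def by auto
    ultimately show ?thesis by auto
  qed
  have walkm: "walk E x y n \<Longrightarrow> x \<in> V \<Longrightarrow> h x = m \<Longrightarrow> h y = m" for x y n
  proof (induction n arbitrary: x)
    case 0 then show ?case by simp
  next
    case (Suc n)
    then obtain z where "E x z" "walk E z y n" by auto
    then show ?case using Suc clos edgeV by blast
  qed
  have allm: "\<forall>y\<in>V. h y = m" using walkm conn x1 by blast
  then have "(\<Sum>u\<in>V. h u) = real (card V) * m" by simp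
  moreover have "card V > 0" using fin nonempty by (simp add: card_gt_0_iff)
  ultimately have "m = 0" using s0 by simp
  then show ?thesis using allm by simp
qed

end


context drg begin

lemma spectral:
  assumes eig: "\<And>l. adj_eigenvalue V E l \<Longrightarrow> l = real k \<or> l \<le> 1"
    and two: "x0 \<in> V" "y0 \<in> V" "x0 \<noteq> y0"
    and g0: "(\<Sum>u\<in>V. g u) = 0"
  shows "Bl g g \<le> (\<Sum>u\<in>V. (g u)^2)"
proof -
  define T where "T = product_topology (\<lambda>_::'a. euclideanreal) V"
  define Box where "Box = PiE V (\<lambda>_. {-1..1::real})"
  define S1 where "S1 = {h \<in> topspace T. (\<Sum>u\<in>V. h u) \<in> {0}}"
  define S2 where "S2 = {h \<in> topspace T. (\<Sum>u\<in>V. (h u)^2) \<in> {1}}"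
  define K where "K = S1 \<inter> (S2 \<inter> Box)"
  have cBox: "compactin T Box" unfolding T_def Box_def
    by (simp add: compactin_PiE)
  have c1: "continuous_map T euclideanreal (\<lambda>h. \<Sum>u\<in>V. h u)"
    unfolding T_def by (intro continuous_map_sum fin continuous_map_product_projection)
  have c2: "continuous_map T euclideanreal (\<lambda>h. \<Sum>u\<in>V. (h u)^2)"
    unfolding T_def by (intro continuous_map_sum fin continuous_map_real_pow continuous_map_product_projection)
  have cQ: "continuous_map T euclideanreal (\<lambda>h. Bl h h)"
    unfolding T_def Bl_def
    by (intro continuous_map_sum fin finN continuous_map_real_mult continuous_map_product_projection)
       (use NV in auto)
  have cl1: "closedin T S1" unfolding S1_def by (rule closedin_continuous_map_preimage[OF c1]) simp
  have cl2: "closedin T S2" unfolding S2_def by (rule closedin_continuous_map_preimage[OF c2]) simp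
  have cK: "compactin T K" unfolding K_def
    by (intro closed_Int_compactin cl1 cl2 cBox)
  have Kchar: "h \<in> K \<longleftrightarrow> h \<in> Box \<and> (\<Sum>u\<in>V. h u) = 0 \<and> (\<Sum>u\<in>V. (h u)^2) = 1" for h
    unfolding K_def S1_def S2_def T_def Box_def by (auto simp: PiE_def Pi_def)
  define a :: real where "a = 1 / sqrt 2"
  define h0 where "h0 = restrict (\<lambda>v. if v = x0 then a else if v = y0 then - a else 0) V"
  have a2: "a^2 = 1/2" unfolding a_def by (simp add: power_divide)
  have a1: "a \<le> 1" unfolding a_def by (simp add: divide_le_eq_1 )
  have a0: "a \<ge> 0" unfolding a_def by simp
  have sub: "{x0, y0} \<subseteq> V" using two by auto
  have "(\<Sum>u\<in>V. h0 u) = (\<Sum>u\<in>{x0,y0}. h0 u)"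
    by (rule sum.mono_neutral_right[OF fin sub]) (auto simp: h0_def)
  then have h0s: "(\<Sum>u\<in>V. h0 u) = 0" using two by (simp add: h0_def)
  have "(\<Sum>u\<in>V. (h0 u)^2) = (\<Sum>u\<in>{x0,y0}. (h0 u)^2)"
    by (rule sum.mono_neutral_right[OF fin sub]) (auto simp: h0_def)
  then have h0q: "(\<Sum>u\<in>V. (h0 u)^2) = 1" using two a2 by (simp add: h0_def)
  have "h0 \<in> Box" unfolding Box_def h0_def using a1 a0 by auto
  then have h0K: "h0 \<in> K" using Kchar h0s h0q by blast
  have "compact ((\<lambda>h. Bl h h) ` K)"
    using image_compactin[OF cK cQ] by simp
  moreover have "(\<lambda>h. Bl h h) ` K \<noteq> {}" using h0K by auto
  ultimately obtain m where "m \<in> (\<lambda>h. Bl h h) ` K" "\<forall>t\<in>(\<lambda>h. Bl h h) ` K. t \<le> m"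
    using compact_attains_sup by blast
  then obtain hm where hmK: "hm \<in> K" and hmax: "\<And>g. g \<in> K \<Longrightarrow> Bl g g \<le> Bl hm hm"
    by auto
  define lam where "lam = Bl hm hm"
  have hm0: "(\<Sum>u\<in>V. hm u) = 0" and hm1: "(\<Sum>u\<in>V. (hm u)^2) = 1" using hmK Kchar by auto
  have hom: "Bl g g \<le> lam * (\<Sum>u\<in>V. (g u)^2)" if gs: "(\<Sum>u\<in>V. g u) = 0" for g
  proof -
    define S where "S = (\<Sum>u\<in>V. (g u)^2)"
    show ?thesis
    proof (cases "S = 0")
      case True
      then have "\<forall>u\<in>V. (g u)^2 = 0"
        using sum_nonneg_eq_0_iff[OF fin, of "\<lambda>u. (g u)^2"] unfolding S_def by simp
      then have "\<forall>u\<in>V. g u = 0" by simp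
      then have "Bl g g = 0" unfolding Bl_def by simp
      then show ?thesis using True S_def by simp
    next
      case False
      have "S \<ge> 0" unfolding S_def by (simp add: sum_nonneg)
      then have Spos: "S > 0" using False by linarith
      define g' where "g' = restrict (\<lambda>v. g v / sqrt S) V"
      have gle: "(g v)^2 \<le> S" if "v \<in> V" for v
        unfolding S_def using fin that by (intro member_le_sum) auto
      have absle: "\<bar>g v\<bar> \<le> sqrt S" if "v \<in> V" for v
        using real_sqrt_le_mono[OF gle[OF that]] by simp
      have sqpos: "sqrt S > 0" using Spos by simp
      have bnd: "-1 \<le> g v / sqrt S \<and> g v / sqrt S \<le> 1" if "v \<in> V" for v
      proof -
        have "\<bar>g v\<bar> \<le> sqrt S" by (rule absle[OF that])
        then have "- sqrt S \<le> g v" "g v \<le> sqrt S" by linarith+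
        then show ?thesis using sqpos by (simp add: pos_le_divide_eq pos_divide_le_eq)
      qed
      have "g' \<in> Box" unfolding g'_def Box_def using bnd by (simp add: restrict_PiE_iff)
      moreover have "(\<Sum>u\<in>V. g' u) = 0"
      proof -
        have "(\<Sum>u\<in>V. g' u) = (\<Sum>u\<in>V. g u / sqrt S)" unfolding g'_def by (intro sum.cong) auto
        also have "\<dots> = (\<Sum>u\<in>V. g u) / sqrt S" by (rule sum_divide_distrib[symmetric])
        finally show ?thesis using gs by simp
      qed
      moreover have "(\<Sum>u\<in>V. (g' u)^2) = 1"
      proof -
        have "(\<Sum>u\<in>V. (g' u)^2) = (\<Sum>u\<in>V. (g u)^2 / S)" unfolding g'_def using Spos
          by (intro sum.cong) (auto simp: power_divide)
        also have "\<dots> = (\<Sum>u\<in>V. (g u)^2) / S" by (rule sum_divide_distrib[symmetric])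
        finally show ?thesis using Spos unfolding S_def by simp
      qed
      ultimately have "g' \<in> K" using Kchar by blast
      then have "Bl g' g' \<le> lam" using hmax lam_def by blast
      moreover have "Bl g' g' = Bl g g / S"
      proof -
        have "Bl g' g' = (\<Sum>u\<in>V. (g u / sqrt S) * (\<Sum>v\<in>N u. g v / sqrt S))"
          unfolding Bl_def g'_def
          by (intro sum.cong refl) (auto intro!: sum.cong dest: subsetD[OF NV])
        also have "\<dots> = (\<Sum>u\<in>V. g u * (\<Sum>v\<in>N u. g v) / S)"
        proof (intro sum.cong refl)
          fix u
          have "(g u / sqrt S) * (\<Sum>v\<in>N u. g v / sqrt S) = (g u / sqrt S) * ((\<Sum>v\<in>N u. g v) / sqrt S)"
            by (simp only: sum_divide_distrib)
          also have "\<dots> = g u * (\<Sum>v\<in>N u. g v) / (sqrt S * sqrt S)" by simp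
          also have "\<dots> = g u * (\<Sum>v\<in>N u. g v) / S" using Spos by simp
          finally show "(g u / sqrt S) * (\<Sum>v\<in>N u. g v / sqrt S) = g u * (\<Sum>v\<in>N u. g v) / S" .
        qed
        also have "\<dots> = Bl g g / S" unfolding Bl_def by (rule sum_divide_distrib[symmetric])
        finally show ?thesis .
      qed
      ultimately have "Bl g g / S \<le> lam" by simp
      then have "Bl g g \<le> lam * S" using Spos by (simp add: pos_divide_le_eq)
      then show ?thesis unfolding S_def .
    qed
  qed
  have var: "Bl hm g = lam * (\<Sum>u\<in>V. hm u * g u)" if gs: "(\<Sum>u\<in>V. g u) = 0" for g
  proof -
    have "\<forall>t. 2 * (Bl hm g - lam * (\<Sum>u\<in>V. hm u * g u)) * t
             + (Bl g g - lam * (\<Sum>u\<in>V. (g u)^2)) * t^2 \<le> 0"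
    proof
      fix t
      have s: "(\<Sum>u\<in>V. hm u + t * g u) = 0" using gs hm0
        by (simp add: sum.distrib sum_distrib_left[symmetric])
      have "Bl (\<lambda>v. hm v + t * g v) (\<lambda>v. hm v + t * g v) \<le> lam * (\<Sum>u\<in>V. (hm u + t * g u)^2)"
        using hom[OF s] .
      moreover have "(\<Sum>u\<in>V. (hm u + t * g u)^2) = 1 + 2 * t * (\<Sum>u\<in>V. hm u * g u) + t^2 * (\<Sum>u\<in>V. (g u)^2)"
        using hm1 by (simp add: power2_sum sum.distrib sum_distrib_left algebra_simps power_mult_distrib)
      ultimately show "2 * (Bl hm g - lam * (\<Sum>u\<in>V. hm u * g u)) * t
             + (Bl g g - lam * (\<Sum>u\<in>V. (g u)^2)) * t^2 \<le> 0"
        unfolding Bl_expand lam_def by (simp add: algebra_simps)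
    qed
    then have "2 * (Bl hm g - lam * (\<Sum>u\<in>V. hm u * g u)) = 0" by (intro quad_lemma) simp
    then show ?thesis by simp
  qed
  define r where "r x = (\<Sum>v\<in>N x. hm v) - lam * hm x" for x
  have rconst: "r u = r w" if "u \<in> V" "w \<in> V" for u w
  proof -
    define g where "g v = (if v = u then 1 else 0) - (if v = w then 1 else 0 :: real)" for v
    have "(\<Sum>v\<in>V. g v) = 0" unfolding g_def using that fin by (simp add: sum_subtractf)
    then have e: "Bl hm g = lam * (\<Sum>v\<in>V. hm v * g v)" by (rule var)
    have "Bl hm g = Bl g hm" by (rule Bl_sym)
    also have "\<dots> = (\<Sum>v\<in>N u. hm v) - (\<Sum>v\<in>N w. hm v)"
      unfolding Bl_def g_def using that by (simp add: left_diff_distrib sum_subtractf sum_ind)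
    finally have 1: "Bl hm g = (\<Sum>v\<in>N u. hm v) - (\<Sum>v\<in>N w. hm v)" .
    have "(\<Sum>v\<in>V. hm v * g v) = (\<Sum>v\<in>V. g v * hm v)" by (simp add: mult.commute)
    also have "\<dots> = hm u - hm w" 
      unfolding g_def using that by (simp add: left_diff_distrib sum_subtractf sum_ind)
    finally have 2: "(\<Sum>v\<in>V. hm v * g v) = hm u - hm w" .
    have "Bl hm g = lam * (hm u - hm w)" using e 2 by (simp only:)
    then show ?thesis using 1 unfolding r_def by (simp add: right_diff_distrib)
  qed
  have "(\<Sum>x\<in>V. r x) = Bl (\<lambda>_. 1) hm - lam * (\<Sum>x\<in>V. hm x)"
    unfolding r_def Bl_def by (simp add: sum_subtractf sum_distrib_left)
  also have "\<dots> = 0" using Bl_sym[of "\<lambda>_. 1" hm] Bl_const[of hm] hm0 by simp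
  finally have rs: "(\<Sum>x\<in>V. r x) = 0" .
  have rc: "\<forall>x\<in>V. r x = r x0" using rconst two(1) by blast
  have "(\<Sum>x\<in>V. r x) = (\<Sum>x\<in>V. r x0)" using rc by (intro sum.cong) auto
  then have "real (card V) * r x0 = 0" using rs by simp
  moreover have "card V > 0" using fin two by (auto simp: card_gt_0_iff)
  ultimately have "r x0 = 0" by simp
  then have "\<forall>x\<in>V. r x = 0" using rc by simp
  then have evec: "\<forall>x\<in>V. (\<Sum>v\<in>N x. hm v) = lam * hm x" unfolding r_def by simp
  have nz: "\<exists>x\<in>V. hm x \<noteq> 0"
  proof (rule ccontr)
    assume "\<not> ?thesis"
    then have "(\<Sum>u\<in>V. (hm u)^2) = 0" by simp
    then show False using hm1 by simp
  qed
  have "adj_eigenvalue V E lam"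
    unfolding adj_eigenvalue_def using nz evec unfolding N_def by blast
  then have "lam = real k \<or> lam \<le> 1" by (rule eig)
  moreover have "lam \<noteq> real k"
  proof
    assume "lam = real k"
    then have "\<forall>x\<in>V. hm x = 0" using max_principle evec hm0 by simp
    then show False using nz by blast
  qed
  ultimately have "lam \<le> 1" by blast
  moreover have "(\<Sum>u\<in>V. (g u)^2) \<ge> 0" by (simp add: sum_nonneg)
  ultimately have "lam * (\<Sum>u\<in>V. (g u)^2) \<le> 1 * (\<Sum>u\<in>V. (g u)^2)"
    by (rule mult_right_mono)
  then show ?thesis using hom[OF g0] by linarith
qed

end


context drg begin

lemma sum_indic: "finite A \<Longrightarrow> (\<Sum>v\<in>A. if v \<in> S then 1 else 0) = real (card (A \<inter> S))"
  by (simp add: sum.If_cases)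

lemma sum_indic_mult: "(\<Sum>u\<in>V. (if u \<in> S then 1 else 0) * F u) = (\<Sum>u\<in>V \<inter> S. F u :: real)"
proof -
  have "(\<Sum>u\<in>V. (if u \<in> S then 1 else 0) * F u) = (\<Sum>u\<in>V. if u \<in> S then F u else 0)"
    by (rule sum.cong) auto
  also have "\<dots> = (\<Sum>u\<in>V \<inter> S. F u)" using fin by (simp add: sum.If_cases)
  finally show ?thesis .
qed

lemma d3_facts: assumes "x \<in> V" "y \<in> V" "d x y = 3"
  shows "x \<noteq> y" "x \<notin> N x" "y \<notin> N y" "x \<notin> N y" "y \<notin> N x" "N x \<inter> N y = {}"
proof -
  show "x \<noteq> y" using assms d_self by auto
  show "x \<notin> N x" "y \<notin> N y" using irr unfolding N_def by auto
  show "x \<notin> N y"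
  proof
    assume "x \<in> N y"
    then have "E y x" unfolding N_def by auto
    then have "E x y" by (rule esym)
    then have "d x y = 1" using assms d_1 by blast
    then show False using assms by simp
  qed
  show "y \<notin> N x" using d_1[OF assms(1,2)] assms(3) unfolding N_def by auto
  show "N x \<inter> N y = {}"
  proof (rule ccontr)
    assume "N x \<inter> N y \<noteq> {}"
    then obtain z where z: "E x z" "E y z" "z \<in> V" unfolding N_def by auto
    have "d x z = 1" using z assms d_1 by auto
    then have "d x y \<le> 2" using d_step[OF assms(1) esym[OF z(2)]] by simp
    then show False using assms by simp
  qed
qed

lemma e_count: assumes "x \<in> V" "y \<in> V" "d x y = 3"
  shows "(\<Sum>u\<in>N y. real (card (N u \<inter> N x))) = real (c 2 * c 3)"
proof -
  have each: "card (N u \<inter> N x) = (if d x u = 2 then c 2 else 0)" if u: "u \<in> N y" for u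
  proof -
    have uV: "u \<in> V" "E y u" using u unfolding N_def by auto
    have "d x u \<ge> 2"
    proof -
      have "d x y \<le> d x u + 1" using d_step[OF assms(1) esym[OF uV(2)]] .
      then show ?thesis using assms by simp
    qed
    show ?thesis
    proof (cases "d x u = 2")
      case True
      have "N u \<inter> N x = {z\<in>V. E u z \<and> d x z = d x u - 1}"
        using True assms(1) d_1 unfolding N_def by auto
      then show ?thesis using drc[OF assms(1) uV(1)] True by simp
    next
      case False
      have "N u \<inter> N x = {}"
      proof (rule ccontr)
        assume "N u \<inter> N x \<noteq> {}"
        then obtain z where z: "E u z" "E x z" "z \<in> V" unfolding N_def by auto
        have "d x z = 1" using z assms d_1 by auto
        then have "d x u \<le> 2" using d_step[OF assms(1) esym[OF z(1)]] by simp
        then show False using False \<open>d x u \<ge> 2\<close> by simp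
      qed
      then show ?thesis using False by simp
    qed
  qed
  have "(\<Sum>u\<in>N y. real (card (N u \<inter> N x))) = (\<Sum>u\<in>N y. if d x u = 2 then real (c 2) else 0)"
    by (rule sum.cong) (auto simp: each)
  also have "\<dots> = real (c 2) * real (card {u\<in>N y. d x u = 2})"
    using finN by (simp add: sum.If_cases Int_def)
  also have "{u\<in>N y. d x u = 2} = {z\<in>V. E y z \<and> d x z = d x y - 1}"
    using assms unfolding N_def by auto
  also have "card \<dots> = c 3" using drc[OF assms(1,2)] assms by simp
  finally show ?thesis by simp
qed

end


context drg begin

definition I :: "'a set \<Rightarrow> 'a \<Rightarrow> real" where "I S v = (if v \<in> S then 1 else 0)"

lemma testvec:
  assumes xV: "x \<in> V" and yV: "y \<in> V" and dxy: "d x y = 3"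
    and SP: "\<And>g. (\<Sum>u\<in>V. g u) = 0 \<Longrightarrow> Bl g g \<le> (\<Sum>u\<in>V. (g u)^2)"
  shows "2 * real (c 2 * c 3) \<ge> 2 * real k ^ 2 - 2 * real k
           + (\<Sum>u\<in>N x. real (card (N u \<inter> N x))) + (\<Sum>u\<in>N y. real (card (N u \<inter> N y)))"
proof -
  note F = d3_facts[OF xV yV dxy]
  have dyx: "d y x = 3" using d_sym[OF xV yV] dxy by simp
  define f where "f v = real k * I {x} v - real k * I {y} v + I (N x) v - I (N y) v" for v
  define AF where "AF u = (\<Sum>v\<in>N u. f v)" for u
  have sI: "(\<Sum>v\<in>A. I S v) = real (card (A \<inter> S))" if "finite A" for A S
    unfolding I_def using sum_indic[OF that] .
  have AF: "AF u = real k * card (N u \<inter> {x}) - real k * card (N u \<inter> {y})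
                 + card (N u \<inter> N x) - card (N u \<inter> N y)" for u
    unfolding AF_def f_def using finN
    by (simp add: sum.distrib sum_subtractf sum_distrib_left[symmetric] sI)
  have Bl_eq: "Bl f f = real k * AF x - real k * AF y + (\<Sum>u\<in>N x. AF u) - (\<Sum>u\<in>N y. AF u)"
  proof -
    have "Bl f f = (\<Sum>u\<in>V. f u * AF u)" unfolding Bl_def AF_def ..
    also have "\<dots> = real k * (\<Sum>u\<in>V. I {x} u * AF u) - real k * (\<Sum>u\<in>V. I {y} u * AF u)
         + (\<Sum>u\<in>V. I (N x) u * AF u) - (\<Sum>u\<in>V. I (N y) u * AF u)"
      unfolding f_def by (simp add: algebra_simps sum.distrib sum_subtractf sum_distrib_left)
    also have "\<dots> = real k * AF x - real k * AF y + (\<Sum>u\<in>N x. AF u) - (\<Sum>u\<in>N y. AF u)"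
    proof -
      have "V \<inter> {x} = {x}" "V \<inter> {y} = {y}" "V \<inter> N x = N x" "V \<inter> N y = N y"
        using xV yV NV by auto
      then show ?thesis unfolding I_def sum_indic_mult by simp
    qed
    finally show ?thesis .
  qed
  have ckx: "card (N x) = k" "card (N y) = k" using card_N xV yV by auto
  have AFx: "AF x = real k" using AF[of x] F ckx by (simp add: Int_absorb)
  have AFy: "AF y = - real k" using AF[of y] F ckx by (simp add: Int_absorb Int_commute)
  have NxAF: "(\<Sum>u\<in>N x. AF u) = real k * real k + (\<Sum>u\<in>N x. real (card (N u \<inter> N x)))
                 - (\<Sum>u\<in>N x. real (card (N u \<inter> N y)))"
  proof -
    have "(\<Sum>u\<in>N x. AF u) = (\<Sum>u\<in>N x. real k + (real (card (N u \<inter> N x)) - real (card (N u \<inter> N y))))"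
    proof (rule sum.cong[OF refl])
      fix u assume u: "u \<in> N x"
      then have "N u \<inter> {x} = {x}" using esym unfolding N_def using xV by auto
      moreover have "N u \<inter> {y} = {}"
        using u F(6) esym unfolding N_def by auto
      ultimately show "AF u = real k + (real (card (N u \<inter> N x)) - real (card (N u \<inter> N y)))"
        using AF[of u] by simp
    qed
    also have "\<dots> = real k * real k + (\<Sum>u\<in>N x. real (card (N u \<inter> N x)))
                 - (\<Sum>u\<in>N x. real (card (N u \<inter> N y)))"
      using ckx by (simp add: sum.distrib sum_subtractf)
    finally show ?thesis .
  qed
  have NyAF: "(\<Sum>u\<in>N y. AF u) = - real k * real k + (\<Sum>u\<in>N y. real (card (N u \<inter> N x)))
                 - (\<Sum>u\<in>N y. real (card (N u \<inter> N y)))"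
  proof -
    have "(\<Sum>u\<in>N y. AF u) = (\<Sum>u\<in>N y. - real k + (real (card (N u \<inter> N x)) - real (card (N u \<inter> N y))))"
    proof (rule sum.cong[OF refl])
      fix u assume u: "u \<in> N y"
      then have "N u \<inter> {y} = {y}" using esym unfolding N_def using yV by auto
      moreover have "N u \<inter> {x} = {}"
        using u F(6) esym unfolding N_def by auto
      ultimately show "AF u = - real k + (real (card (N u \<inter> N x)) - real (card (N u \<inter> N y)))"
        using AF[of u] by simp
    qed
    also have "\<dots> = - real k * real k + (\<Sum>u\<in>N y. real (card (N u \<inter> N x)))
                 - (\<Sum>u\<in>N y. real (card (N u \<inter> N y)))"
      using ckx by (simp add: sum.distrib sum_subtractf)
    finally show ?thesis .
  qed
  have e1: "(\<Sum>u\<in>N x. real (card (N u \<inter> N y))) = real (c 2 * c 3)" using e_count[OF yV xV dyx] .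
  have e2: "(\<Sum>u\<in>N y. real (card (N u \<inter> N x))) = real (c 2 * c 3)" using e_count[OF xV yV dxy] .
  have sumf: "(\<Sum>u\<in>V. f u) = 0"
  proof -
    have "(\<Sum>u\<in>V. f u) = real k * card (V \<inter> {x}) - real k * card (V \<inter> {y}) + card (V \<inter> N x) - card (V \<inter> N y)"
      unfolding f_def using fin by (simp add: sum.distrib sum_subtractf sum_distrib_left[symmetric] sI)
    moreover have "V \<inter> {x} = {x}" "V \<inter> {y} = {y}" "V \<inter> N x = N x" "V \<inter> N y = N y"
      using xV yV NV by auto
    ultimately show ?thesis using ckx by simp
  qed
  have sq: "(\<Sum>u\<in>V. (f u)^2) = 2 * real k ^ 2 + 2 * real k"
  proof -
    have pw: "(f u)^2 = real k ^ 2 * I {x} u + real k ^ 2 * I {y} u + I (N x) u + I (N y) u" for u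
      unfolding f_def I_def using F by (auto simp: power2_eq_square)
    have "(\<Sum>u\<in>V. (f u)^2) = real k ^ 2 * card (V \<inter> {x}) + real k ^ 2 * card (V \<inter> {y}) + card (V \<inter> N x) + card (V \<inter> N y)"
      unfolding pw using fin by (simp add: sum.distrib sum_distrib_left[symmetric] sI)
    moreover have "V \<inter> {x} = {x}" "V \<inter> {y} = {y}" "V \<inter> N x = N x" "V \<inter> N y = N y"
      using xV yV NV by auto
    ultimately show ?thesis using ckx by simp
  qed
  have "Bl f f \<le> 2 * real k ^ 2 + 2 * real k" using SP[OF sumf] sq by simp
  then show ?thesis
    unfolding Bl_eq AFx AFy NxAF NyAF e1 e2 by (simp add: power2_eq_square algebra_simps)
qed

end


context drg begin

lemma sub_card_N: "u \<in> V \<Longrightarrow> card {z\<in>V. E u z \<and> P z} \<le> k"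
  using card_mono[OF finN[of u], of "{z\<in>V. E u z \<and> P z}"] card_N unfolding N_def by auto

lemma key:
  assumes SP: "\<And>g. (\<Sum>u\<in>V. g u) = 0 \<Longrightarrow> Bl g g \<le> (\<Sum>u\<in>V. (g u)^2)"
    and xV: "x \<in> V" and yV: "y \<in> V" and dxy: "d x y = 3" and k3: "k \<ge> 3"
  shows "c 2 = k - 1" "c 3 = k" "b 2 = 1" "\<And>u v. E x u \<Longrightarrow> E x v \<Longrightarrow> \<not> E u v"
proof -
  have "c 3 = card {z\<in>V. E y z \<and> d x z = d x y - 1}" using drc[OF xV yV] dxy by simp
  then have c3le: "c 3 \<le> k" using sub_card_N[OF yV] by simp
  have "d x y = Suc 2" using dxy by simp
  then obtain w where w: "E y w" "d x w = 2" using d_pred[OF xV yV] by blast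
  have wV: "w \<in> V" using w edgeV by blast
  have b2: "b 2 \<ge> 1" using b_pos[OF xV wV yV esym[OF w(1)]] w dxy by simp
  define A where "A = {z\<in>V. E w z \<and> d x z = 1}"
  define B where "B = {z\<in>V. E w z \<and> d x z = 3}"
  have cA: "card A = c 2" unfolding A_def using drc[OF xV wV] w by simp
  have cB: "card B = b 2" unfolding B_def using drb[OF xV wV] w by simp
  have "A \<union> B \<subseteq> N w" "A \<inter> B = {}" unfolding A_def B_def N_def by auto
  moreover have "finite A" "finite B" unfolding A_def B_def using fin by auto
  ultimately have "card A + card B \<le> k"
    using card_mono[OF finN, of "A \<union> B" w] card_Un_disjoint[of A B] card_N[OF wV] by simp
  then have cb: "c 2 + b 2 \<le> k" using cA cB by simp
  define Px where "Px = (\<Sum>u\<in>N x. real (card (N u \<inter> N x)))"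
  define Py where "Py = (\<Sum>u\<in>N y. real (card (N u \<inter> N y)))"
  have Px0: "Px \<ge> 0" "Py \<ge> 0" unfolding Px_def Py_def by (auto intro: sum_nonneg)
  have T: "2 * real (c 2 * c 3) \<ge> 2 * real k ^ 2 - 2 * real k + Px + Py"
    using testvec[OF xV yV dxy SP] unfolding Px_def Py_def by blast
  have "c 2 * c 3 \<le> (k - 1) * k" using cb b2 c3le by (intro mult_le_mono) auto
  then have "real (c 2 * c 3) \<le> real ((k - 1) * k)" by linarith
  also have "real ((k - 1) * k) = real k ^ 2 - real k" using k3 by (simp add: of_nat_diff power2_eq_square algebra_simps)
  finally have up: "real (c 2 * c 3) \<le> real k ^ 2 - real k" .
  have "Px = 0" using T up Px0 by linarith
  have lo: "c 2 * c 3 \<ge> (k - 1) * k"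
  proof -
    have "real ((k - 1) * k) = real k ^ 2 - real k" using k3 by (simp add: of_nat_diff power2_eq_square algebra_simps)
    then have "real ((k - 1) * k) \<le> real (c 2 * c 3)" using T Px0 by linarith
    then show ?thesis by linarith
  qed
  show c2: "c 2 = k - 1"
  proof (rule ccontr)
    assume "c 2 \<noteq> k - 1"
    then have "c 2 \<le> k - 2" using cb b2 by linarith
    then have "c 2 * c 3 \<le> (k - 2) * k" using c3le by (intro mult_le_mono) auto
    moreover have "(k - 2) * k < (k - 1) * k" using k3 by (intro mult_less_mono1) auto
    ultimately show False using lo by linarith
  qed
  show "c 3 = k"
  proof (rule ccontr)
    assume "c 3 \<noteq> k"
    then have "c 3 < k" using c3le by linarith
    then have "(k - 1) * c 3 < (k - 1) * k" using k3 by (intro mult_less_mono2) auto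
    then show False using lo c2 by (simp add: mult.commute)
  qed
  show "b 2 = 1" using cb b2 c2 k3 by linarith
  fix u v assume xu: "E x u" and xv: "E x v"
  show "\<not> E u v"
  proof
    assume uv: "E u v"
    have "\<forall>u\<in>N x. real (card (N u \<inter> N x)) = 0"
      using \<open>Px = 0\<close> unfolding Px_def by (subst sum_nonneg_eq_0_iff[OF finN, symmetric]) auto
    moreover have "u \<in> N x" using xu edgeV unfolding N_def by auto
    ultimately have "card (N u \<inter> N x) = 0" by simp
    then have "N u \<inter> N x = {}" using finN by simp
    moreover have "v \<in> N u \<inter> N x" using uv xv edgeV unfolding N_def by auto
    ultimately show False by blast
  qed
qed

end


lemma double_count:
  assumes "finite A" "finite B"
  shows "(\<Sum>a\<in>A. card {b\<in>B. R a b}) = (\<Sum>b\<in>B. card {a\<in>A. R a b})"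
proof -
  have "\<And>a. card {b\<in>B. R a b} = (\<Sum>b\<in>B. if R a b then 1 else 0)"
    using assms(2) by (simp add: sum.If_cases Int_def)
  moreover have "\<And>b. card {a\<in>A. R a b} = (\<Sum>a\<in>A. if R a b then 1 else 0)"
    using assms(1) by (simp add: sum.If_cases Int_def)
  ultimately show ?thesis by (simp add: sum.swap[of _ A B])
qed

locale drg3 = drg +
  assumes SP: "\<And>g. (\<Sum>u\<in>V. g u) = 0 \<Longrightarrow> Bl g g \<le> (\<Sum>u\<in>V. (g u)^2)"
    and k3: "k \<ge> 3" and p3: "\<exists>x\<in>V. \<exists>y\<in>V. d x y = 3"
begin

lemma b_chain: "b 0 \<ge> 1" "b 1 \<ge> 1" "b 2 \<ge> 1"
proof -
  show "b 0 \<ge> 1" using k3 kdef by simp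
  obtain x y where xy: "x \<in> V" "y \<in> V" "d x y = 3" using p3 by blast
  have "d x y = Suc 2" using xy by simp
  then obtain w2 where w2: "E y w2" "d x w2 = 2" using d_pred[OF xy(1,2)] by blast
  have w2V: "w2 \<in> V" using w2 edgeV by blast
  have "d x w2 = Suc 1" using w2 by simp
  then obtain w1 where w1: "E w2 w1" "d x w1 = 1" using d_pred[OF xy(1) w2V] by blast
  have w1V: "w1 \<in> V" using w1 edgeV by blast
  show "b 2 \<ge> 1" using b_pos[OF xy(1) w2V xy(2) esym[OF w2(1)]] w2 xy by simp
  show "b 1 \<ge> 1" using b_pos[OF xy(1) w1V w2V esym[OF w1(1)]] w2 w1 by simp
qed

lemma all3: assumes "x \<in> V" shows "\<exists>y\<in>V. d x y = 3"
proof -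
  obtain y1 where y1: "y1 \<in> V" "E x y1" "d x y1 = 1"
    using step_up[OF assms assms] b_chain d_self by auto
  obtain y2 where y2: "y2 \<in> V" "E y1 y2" "d x y2 = 2"
    using step_up[OF assms y1(1)] b_chain y1 by auto
  obtain y3 where y3: "y3 \<in> V" "d x y3 = 3"
    using step_up[OF assms y2(1)] b_chain y2 by auto
  then show ?thesis by blast
qed

lemma c2: "c 2 = k - 1" and c3: "c 3 = k" and b2: "b 2 = 1"
proof -
  obtain x y where xy: "x \<in> V" "y \<in> V" "d x y = 3" using p3 by blast
  show "c 2 = k - 1" "c 3 = k" "b 2 = 1" using key[OF SP xy k3] by auto
qed

lemma notri: "E u v \<Longrightarrow> E u w \<Longrightarrow> \<not> E v w"
proof -
  assume uv: "E u v" and uw: "E u w"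
  then have uV: "u \<in> V" using edgeV by blast
  obtain y where "y \<in> V" "d u y = 3" using all3[OF uV] by blast
  then show "\<not> E v w" using key(4)[OF SP uV _ _ k3] uv uw by blast
qed

lemma L1: assumes "x \<in> V" "u \<in> V" "d x u = 1" "E u z" shows "d x z \<noteq> 1"
proof
  assume "d x z = 1"
  have zV: "z \<in> V" using assms edgeV by blast
  have "E x u" using d_1[OF assms(1,2)] assms by simp
  moreover have "E x z" using d_1[OF assms(1) zV] \<open>d x z = 1\<close> by simp
  ultimately show False using notri assms(4) by blast
qed

lemma L2: assumes xV: "x \<in> V" and wV: "w \<in> V" and dw: "d x w = 2" and wz: "E w z" shows "d x z \<noteq> 2"
proof
  assume dz: "d x z = 2"
  have zV: "z \<in> V" using wz edgeV by blast
  define A where "A = {z\<in>V. E w z \<and> d x z = 1}"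
  define B where "B = {z\<in>V. E w z \<and> d x z = 3}"
  have cA: "card A = c 2" unfolding A_def using drc[OF xV wV] dw by simp
  have cB: "card B = b 2" unfolding B_def using drb[OF xV wV] dw by simp
  have sub: "A \<union> B \<union> {z} \<subseteq> N w" unfolding A_def B_def N_def using wz zV by auto
  have fA: "finite A" "finite B" unfolding A_def B_def using fin by auto
  have dis: "A \<inter> B = {}" "(A \<union> B) \<inter> {z} = {}" unfolding A_def B_def using dz by auto
  have "card (A \<union> B \<union> {z}) = card A + card B + 1"
    using fA dis by (simp add: card_Un_disjoint)
  moreover have "card (A \<union> B \<union> {z}) \<le> k" using card_mono[OF finN sub] card_N[OF wV] by simp
  ultimately show False using cA cB c2 b2 k3 by simp
qed

lemma L3: assumes xV: "x \<in> V" and vV: "v \<in> V" and dv: "d x v = 3" and vz: "E v z" shows "d x z = 2"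
proof -
  have s: "{z\<in>V. E v z \<and> d x z = 2} \<subseteq> N v" unfolding N_def by auto
  have "card {z\<in>V. E v z \<and> d x z = 2} = k" using drc[OF xV vV] dv c3 by simp
  then have "{z\<in>V. E v z \<and> d x z = 2} = N v"
    using card_subset_eq[OF finN s] card_N[OF vV] by simp
  moreover have "z \<in> N v" using vz edgeV unfolding N_def by auto
  ultimately show ?thesis by auto
qed

lemma no4: assumes xV: "x \<in> V" and zV: "z \<in> V" shows "d x z \<le> 3"
proof (rule ccontr)
  assume "\<not> d x z \<le> 3"
  then obtain z4 where z4: "z4 \<in> V" "d x z4 = 4" using down[OF xV zV refl, of 4] by auto
  have "d x z4 = Suc 3" using z4 by simp
  then obtain v where v: "E z4 v" "d x v = 3" using d_pred[OF xV z4(1)] by blast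
  have vV: "v \<in> V" using v edgeV by blast
  have "d x z4 = 2" using L3[OF xV vV v(2) esym[OF v(1)]] .
  then show False using z4 by simp
qed

lemma edge_par: assumes xV: "x \<in> V" and uw: "E u w" shows "odd (d x u + d x w)"
proof -
  have uV: "u \<in> V" and wV: "w \<in> V" using uw edgeV by auto
  have le: "d x w \<le> d x u + 1" "d x u \<le> d x w + 1"
    using d_step[OF xV uw] d_step2[OF xV uw] by auto
  have "d x u \<noteq> d x w"
  proof
    assume eq: "d x u = d x w"
    have "d x u \<le> 3" using no4[OF xV uV] .
    then consider "d x u = 0" | "d x u = 1" | "d x u = 2" | "d x u = 3" by linarith
    then show False
    proof cases
      case 1
      then have "u = x" using d_0[OF xV uV] by simp
      moreover have "w = x" using d_0[OF xV wV] eq 1 by simp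
      ultimately show False using uw irr by simp
    next
      case 2 then show False using L1[OF xV uV _ uw] eq by simp
    next
      case 3 then show False using L2[OF xV uV _ uw] eq by simp
    next
      case 4 then show False using L3[OF xV uV _ uw] eq by simp
    qed
  qed
  then have "d x w = d x u + 1 \<or> d x u = d x w + 1" using le by linarith
  then show ?thesis by auto
qed

lemma walk_par: "walk E u w n \<Longrightarrow> x \<in> V \<Longrightarrow> even (d x u + d x w + n)"
proof (induction n arbitrary: u)
  case 0 then show ?case by simp
next
  case (Suc n)
  then obtain z where z: "E u z" "walk E z w n" by auto
  have "even (d x z + d x w + n)" using Suc z by blast
  moreover have "odd (d x u + d x z)" using edge_par[OF Suc.prems(2) z(1)] .
  ultimately show ?case by presburger
qed

lemma dist_par: "u \<in> V \<Longrightarrow> w \<in> V \<Longrightarrow> x \<in> V \<Longrightarrow> even (d x u + d x w + d u w)"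
  using walk_par d_walk by blast

lemma G2: assumes xV: "x \<in> V" shows "card {v\<in>V. d x v = 2} = k"
proof -
  define G1 where "G1 = {v\<in>V. d x v = 1}"
  define G2 where "G2 = {v\<in>V. d x v = 2}"
  have f: "finite G1" "finite G2" unfolding G1_def G2_def using fin by auto
  have G1N: "G1 = N x" unfolding G1_def N_def using d_1[OF xV] by auto
  have b1: "b 1 = k - 1"
  proof -
    obtain u where u: "u \<in> V" "E x u" using step_up[OF xV xV] b_chain d_self by auto
    have du: "d x u = 1" using d_1[OF xV u(1)] u by simp
    define S where "S = {z\<in>V. E u z \<and> d x z = 2}"
    have "S = {z\<in>V. E u z \<and> d x z = d x u + 1}" unfolding S_def using du by (simp add: numeral_2_eq_2)
    then have cS: "card S = b 1" using drb[OF xV u(1)] du by simp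
    have "N u = insert x S"
    proof
      show "insert x S \<subseteq> N u" unfolding S_def N_def using xV esym[OF u(2)] by auto
      show "N u \<subseteq> insert x S"
      proof
        fix z assume z: "z \<in> N u"
        then have zV: "z \<in> V" and uz: "E u z" unfolding N_def by auto
        have "d x z \<le> 2" using d_step[OF xV uz] du by simp
        moreover have "d x z \<noteq> 1" using L1[OF xV u(1) du uz] .
        ultimately have "d x z = 0 \<or> d x z = 2" by linarith
        then show "z \<in> insert x S" using d_0[OF xV zV] zV uz unfolding S_def by auto
      qed
    qed
    moreover have "x \<notin> S" unfolding S_def using d_self by auto
    moreover have "finite S" unfolding S_def using fin by auto
    ultimately have "card (N u) = card S + 1" by simp
    then show ?thesis using card_N[OF u(1)] cS by simp
  qed
  have "(\<Sum>u\<in>G1. card {w\<in>G2. E u w}) = (\<Sum>w\<in>G2. card {u\<in>G1. E u w})"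
    by (rule double_count[OF f])
  moreover have "(\<Sum>u\<in>G1. card {w\<in>G2. E u w}) = (\<Sum>u\<in>G1. k - 1)"
  proof (rule sum.cong[OF refl])
    fix u assume u: "u \<in> G1"
    then have "{w\<in>G2. E u w} = {z\<in>V. E u z \<and> d x z = d x u + 1}" unfolding G1_def G2_def by auto
    moreover have uV: "u \<in> V" "d x u = 1" using u unfolding G1_def by auto
    ultimately show "card {w\<in>G2. E u w} = k - 1" using drb[OF xV uV(1)] b1 by simp
  qed
  moreover have "(\<Sum>w\<in>G2. card {u\<in>G1. E u w}) = (\<Sum>w\<in>G2. k - 1)"
  proof (rule sum.cong[OF refl])
    fix w assume w: "w \<in> G2"
    then have "{u\<in>G1. E u w} = {z\<in>V. E w z \<and> d x z = d x w - 1}" unfolding G1_def G2_def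
      using esym by auto
    moreover have wV: "w \<in> V" "d x w = 2" using w unfolding G2_def by auto
    moreover have "card {z\<in>V. E w z \<and> d x z = d x w - 1} = c (d x w)" using drc[OF xV wV(1)] wV(2) by simp
    ultimately show "card {u\<in>G1. E u w} = k - 1" using c2 by simp
  qed
  moreover have "card G1 = k" using G1N card_N[OF xV] by simp
  ultimately have "k * (k - 1) = card G2 * (k - 1)" by simp
  then have "card G2 = k" using k3 by simp
  then show ?thesis unfolding G2_def .
qed

lemma G3: assumes xV: "x \<in> V" shows "card {v\<in>V. d x v = 3} = 1"
proof -
  define G2 where "G2 = {v\<in>V. d x v = 2}"
  define G3 where "G3 = {v\<in>V. d x v = 3}"
  have f: "finite G2" "finite G3" unfolding G3_def G2_def using fin by auto
  have "(\<Sum>u\<in>G2. card {w\<in>G3. E u w}) = (\<Sum>w\<in>G3. card {u\<in>G2. E u w})"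
    by (rule double_count[OF f])
  moreover have "(\<Sum>u\<in>G2. card {w\<in>G3. E u w}) = (\<Sum>u\<in>G2. 1)"
  proof (rule sum.cong[OF refl])
    fix u assume u: "u \<in> G2"
    then have "{w\<in>G3. E u w} = {z\<in>V. E u z \<and> d x z = d x u + 1}" unfolding G3_def G2_def by auto
    moreover have uV: "u \<in> V" "d x u = 2" using u unfolding G2_def by auto
    ultimately show "card {w\<in>G3. E u w} = 1" using drb[OF xV uV(1)] b2 by simp
  qed
  moreover have "(\<Sum>w\<in>G3. card {u\<in>G2. E u w}) = (\<Sum>w\<in>G3. k)"
  proof (rule sum.cong[OF refl])
    fix w assume w: "w \<in> G3"
    then have "{u\<in>G2. E u w} = {z\<in>V. E w z \<and> d x z = d x w - 1}" unfolding G3_def G2_def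
      using esym by auto
    moreover have wV: "w \<in> V" "d x w = 3" using w unfolding G3_def by auto
    moreover have "card {z\<in>V. E w z \<and> d x z = d x w - 1} = c (d x w)" using drc[OF xV wV(1)] wV(2) by simp
    ultimately show "card {u\<in>G2. E u w} = k" using c3 by simp
  qed
  moreover have "card G2 = k" using G2[OF xV] unfolding G2_def .
  ultimately have "k = card G3 * k" by simp
  then have "card G3 = 1" using k3 by simp
  then show ?thesis unfolding G3_def .
qed

end


context drg3 begin

definition sig where "sig v = (THE y. y \<in> V \<and> d v y = 3)"

lemma sig: assumes "v \<in> V" shows "sig v \<in> V" "d v (sig v) = 3"
  and "\<And>y. y \<in> V \<Longrightarrow> d v y = 3 \<Longrightarrow> y = sig v"
proof -
  obtain a where a: "{y\<in>V. d v y = 3} = {a}" using card_1_singletonE[OF G3[OF assms]] by blast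
  have aa: "\<And>y. (y \<in> V \<and> d v y = 3) \<longleftrightarrow> y = a" using a by (simp add: set_eq_iff) 
  then have sa: "sig v = a" unfolding sig_def by simp
  have "a \<in> V \<and> d v a = 3" using aa by simp
  then show "sig v \<in> V" "d v (sig v) = 3" using sa by simp_all
  show "\<And>y. y \<in> V \<Longrightarrow> d v y = 3 \<Longrightarrow> y = sig v" using aa sa by blast
qed

lemma sig_inv: assumes "v \<in> V" shows "sig (sig v) = v"
proof -
  have "d (sig v) v = d v (sig v)" by (rule d_sym[OF sig(1)[OF assms] assms])
  then have "d (sig v) v = 3" using sig(2)[OF assms] by simp
  then show ?thesis by (rule sym[OF sig(3)[OF sig(1)[OF assms] assms]])
qed

lemma iso: "graph_iso V E ({0..k} \<times> (UNIV :: bool set)) crown_adj"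
proof -
  obtain x0 where x0: "x0 \<in> V" using nonempty by blast
  define Ev where "Ev = {v\<in>V. even (d x0 v)}"
  have Ev_eq: "Ev = insert x0 {v\<in>V. d x0 v = 2}"
  proof
    show "Ev \<subseteq> insert x0 {v\<in>V. d x0 v = 2}"
    proof
      fix v assume v: "v \<in> Ev"
      then have vV: "v \<in> V" and ev: "even (d x0 v)" unfolding Ev_def by auto
      have "d x0 v \<le> 3" using no4[OF x0 vV] .
      then have "d x0 v = 0 \<or> d x0 v = 1 \<or> d x0 v = 2 \<or> d x0 v = 3" by linarith
      then have "d x0 v = 0 \<or> d x0 v = 2" using ev by auto
      then show "v \<in> insert x0 {v\<in>V. d x0 v = 2}" using d_0[OF x0 vV] vV by auto
    qed
    show "insert x0 {v\<in>V. d x0 v = 2} \<subseteq> Ev" unfolding Ev_def using x0 d_self by auto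
  qed
  have "x0 \<notin> {v\<in>V. d x0 v = 2}" using d_self by auto
  then have cEv: "card Ev = k + 1" unfolding Ev_eq using G2[OF x0] fin by simp
  have fEv: "finite Ev" unfolding Ev_def using fin by simp
  obtain g where g: "bij_betw g Ev {0..k}"
    using finite_same_card_bij[OF fEv, of "{0..k}"] cEv by auto
  have ginj: "\<And>u w. u \<in> Ev \<Longrightarrow> w \<in> Ev \<Longrightarrow> g u = g w \<Longrightarrow> u = w"
    using g unfolding bij_betw_def inj_on_def by blast
  have gim: "g ` Ev = {0..k}" using g unfolding bij_betw_def by blast
  have sigpar: "even (d x0 (sig v)) \<longleftrightarrow> odd (d x0 v)" if "v \<in> V" for v
    using dist_par[OF that sig(1)[OF that] x0] sig(2)[OF that] by (simp add: even_add)
  define phi where "phi v = (if even (d x0 v) then (g v, True) else (g (sig v), False))" for v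
  have adj_odd: "E u w \<longleftrightarrow> u \<noteq> sig w"
    if u: "u \<in> V" "even (d x0 u)" and w: "w \<in> V" "odd (d x0 w)" for u w
  proof -
    have "even (d x0 u + d x0 w + d u w)" using dist_par[OF u(1) w(1) x0] .
    then have "odd (d u w)" using u w by (simp add: even_add)
    moreover have "d u w \<le> 3" using no4[OF u(1) w(1)] .
    then have "d u w = 0 \<or> d u w = 1 \<or> d u w = 2 \<or> d u w = 3" by linarith
    ultimately have "d u w = 1 \<or> d u w = 3" by auto
    moreover have "E u w \<longleftrightarrow> d u w = 1" using d_1[OF u(1) w(1)] by simp
    moreover have "u = sig w \<longleftrightarrow> d u w = 3"
    proof
      assume "u = sig w"
      then have "d w u = 3" using sig(2)[OF w(1)] by simp
      then show "d u w = 3" using d_sym[OF u(1) w(1)] by simp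
    next
      assume "d u w = 3"
      then have "d w u = 3" using d_sym[OF u(1) w(1)] by simp
      then show "u = sig w" by (rule sig(3)[OF w(1) u(1)])
    qed
    ultimately show ?thesis by auto
  qed
  have "bij_betw phi V ({0..k} \<times> (UNIV :: bool set))"
    unfolding bij_betw_def
  proof
    show "inj_on phi V"
    proof (rule inj_onI)
      fix u w assume u: "u \<in> V" and w: "w \<in> V" and eq: "phi u = phi w"
      show "u = w"
      proof (cases "even (d x0 u)")
        case True
        then have "even (d x0 w)" using eq unfolding phi_def by (auto split: if_splits)
        then show ?thesis using True eq ginj u w unfolding phi_def Ev_def by auto
      next
        case False
        then have F2: "odd (d x0 w)" using eq unfolding phi_def by (auto split: if_splits)
        have "g (sig u) = g (sig w)" using False F2 eq unfolding phi_def by simp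
        moreover have "sig u \<in> Ev" "sig w \<in> Ev"
          using sigpar u w False F2 sig(1) unfolding Ev_def by auto
        ultimately have "sig u = sig w" using ginj by blast
        then have "sig (sig u) = sig (sig w)" by simp
        then show ?thesis using sig_inv[OF u] sig_inv[OF w] by simp
      qed
    qed
    show "phi ` V = {0..k} \<times> UNIV"
    proof
      show "phi ` V \<subseteq> {0..k} \<times> UNIV"
      proof
        fix p assume "p \<in> phi ` V"
        then obtain v where v: "v \<in> V" "p = phi v" by auto
        show "p \<in> {0..k} \<times> UNIV"
        proof (cases "even (d x0 v)")
          case True
          then have "v \<in> Ev" using v unfolding Ev_def by auto
          then show ?thesis using v True gim unfolding phi_def by auto
        next
          case False
          then have "sig v \<in> Ev" using v sigpar sig(1) unfolding Ev_def by auto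
          then show ?thesis using v False gim unfolding phi_def by auto
        qed
      qed
      show "{0..k} \<times> UNIV \<subseteq> phi ` V"
      proof
        fix p assume p: "p \<in> ({0..k} \<times> (UNIV :: bool set))"
        obtain i s where ip: "p = (i, s)" "i \<in> {0..k}" using p by auto
        have "i \<in> g ` Ev" using gim ip by simp
        then obtain e where e: "e \<in> Ev" "g e = i" by blast
        have eV: "e \<in> V" and ee: "even (d x0 e)" using e unfolding Ev_def by auto
        show "p \<in> phi ` V"
        proof (cases s)
          case True
          then have "phi e = p" unfolding phi_def using ee e ip by simp
          then show ?thesis using eV by blast
        next
          case False
          have "odd (d x0 (sig e))" using sigpar[OF eV] ee by blast
          moreover have "sig (sig e) = e" using sig_inv[OF eV] .
          ultimately have "phi (sig e) = p" unfolding phi_def using e ip False by simp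
          then show ?thesis using sig(1)[OF eV] by blast
        qed
      qed
    qed
  qed
  moreover have "\<forall>u\<in>V. \<forall>w\<in>V. E u w \<longleftrightarrow> crown_adj (phi u) (phi w)"
  proof (intro ballI)
    fix u w assume u: "u \<in> V" and w: "w \<in> V"
    show "E u w \<longleftrightarrow> crown_adj (phi u) (phi w)"
    proof (cases "even (d x0 u) = even (d x0 w)")
      case True
      have "\<not> E u w"
      proof
        assume "E u w"
        then have "odd (d x0 u + d x0 w)" by (rule edge_par[OF x0])
        then show False using True by (simp add: even_add)
      qed
      moreover have "\<not> crown_adj (phi u) (phi w)" unfolding crown_adj_def phi_def using True by auto
      ultimately show ?thesis by simp
    next
      case False
      show ?thesis
      proof (cases "even (d x0 u)")
        case True
        then have wo: "odd (d x0 w)" using False by simp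
        have "sig w \<in> Ev" using sigpar[OF w] wo sig(1)[OF w] unfolding Ev_def by auto
        moreover have "u \<in> Ev" using u True unfolding Ev_def by auto
        ultimately have "g u = g (sig w) \<longleftrightarrow> u = sig w" using ginj by blast
        then show ?thesis using adj_odd[OF u True w wo] True wo unfolding crown_adj_def phi_def by auto
      next
        case uo: False
        then have we: "even (d x0 w)" using False by simp
        have "sig u \<in> Ev" using sigpar[OF u] uo sig(1)[OF u] unfolding Ev_def by auto
        moreover have "w \<in> Ev" using w we unfolding Ev_def by auto
        ultimately have "g (sig u) = g w \<longleftrightarrow> w = sig u" using ginj by blast
        moreover have "E u w \<longleftrightarrow> E w u" using esym by blast
        ultimately show ?thesis using adj_odd[OF w we u uo] we uo unfolding crown_adj_def phi_def by auto
      qed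
    qed
  qed
  ultimately show ?thesis unfolding graph_iso_def by blast
qed

end



theorem theorem4p1:
  fixes V :: "'a set" and E :: "'a \<Rightarrow> 'a \<Rightarrow> bool"
    and b c :: "nat \<Rightarrow> nat" and k D :: nat and \<theta> :: "nat \<Rightarrow> real"
  assumes "distance_regular V E b c"
    and "k = b 0" and "k \<ge> 3"
    and "D = diameter V E" and "D \<ge> 3"
    and "\<forall>i<D. \<theta> (Suc i) < \<theta> i"
    and "{t. adj_eigenvalue V E t} = \<theta> ` {0..D}"
    and "\<theta> 0 = real k"
    and "\<theta> 1 \<le> 1"
  shows "D = 3 \<and> graph_iso V E ({0..k} \<times> (UNIV :: bool set)) crown_adj"
proof -
  interpret G: drg V E b c k by unfold_locales (use assms in auto)
  have anti: "1 \<le> i \<longrightarrow> i \<le> D \<longrightarrow> \<theta> i \<le> \<theta> 1" for i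
  proof (induction i)
    case 0 then show ?case by simp
  next
    case (Suc i)
    show ?case
    proof (intro impI)
      assume h: "1 \<le> Suc i" "Suc i \<le> D"
      show "\<theta> (Suc i) \<le> \<theta> 1"
      proof (cases "i = 0")
        case True then show ?thesis by simp
      next
        case False
        then have "\<theta> i \<le> \<theta> 1" using Suc h by simp
        moreover have "\<theta> (Suc i) < \<theta> i" using assms(6) h by simp
        ultimately show ?thesis by simp
      qed
    qed
  qed
  have eig: "l = real k \<or> l \<le> 1" if "adj_eigenvalue V E l" for l
  proof -
    have "l \<in> \<theta> ` {0..D}" using that assms(7) by blast
    then obtain i where i: "i \<le> D" "l = \<theta> i" by auto
    show ?thesis
    proof (cases "i = 0")
      case True then show ?thesis using i assms(8) by simp
    next
      case False
      then show ?thesis using anti[of i] i assms(9) by simp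
    qed
  qed
  obtain x y where xy: "x \<in> V" "y \<in> V" "gdist E x y = D" using G.diam_in assms(4) by metis
  have "x \<noteq> y" using xy assms(5) G.d_self by auto
  have SP: "\<And>g. (\<Sum>u\<in>V. g u) = 0 \<Longrightarrow> G.Bl g g \<le> (\<Sum>u\<in>V. (g u)^2)"
    using G.spectral[OF eig xy(1,2) \<open>x \<noteq> y\<close>] by blast
  obtain y3 where y3: "y3 \<in> V" "gdist E x y3 = 3" using G.down[OF xy(1,2,3) assms(5)] by blast
  interpret H: drg3 V E b c k
    by unfold_locales (use SP assms(3) xy y3 in auto)
  have "D \<le> 3" using H.no4[OF xy(1,2)] xy(3) by simp
  then have "D = 3" using assms(5) by simp
  then show ?thesis using H.iso by simp
qed



end
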